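(* Let $G$ be a locally compact Polish group with identity element $\mathbf 1$, and let $\bar{\mathbf 1}$ denote the identity of $G^\omega$. There exists a compact set $K_0\subseteq G^\omega$ with $\bar{\mathbf 1}\in K_0$ such that for each compact $K\subseteq G^\omega$ with $\bar{\mathbf 1}\in K$, there is a continuous group homomorphism $\varphi:G^\omega\to G^\omega$ such that for every group word $w$, $\varphi^{-1}(w[K_0])=w[K]$. In particular, $\langle K_0\rangle$ is a universal compactly generated subgroup of $G^\omega$, i.e., for every compact $K\subseteq G^\omega$ there is a continuous homomorphism $\psi:G^\omega\to G^\omega$ with $\psi^{-1}(\langle K_0\rangle)=\langle K\rangle$.
   Context: $G^\omega$ has the product topology. An $m$-ary group word $w$ is a formal expression combining $m$ symbols using multiplication and inverses (e.g. $b^{-1}ac^{-1}$); it induces a continuous map $G^m\to G$ (and likewise on $G^\omega$). For $A\subseteq G^\omega$, $w[A]=\{w(x_1,\ldots,x_m):x_1,\ldots,x_m\in A\}$, and $\langle A\rangle$ is the subgroup generated by $A$. *)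

theory Defs
  imports "HOL-Analysis.Analysis" "HOL-Library.Function_Algebras"
begin

text \<open>Groups are written additively (Isabelle's group_add, not assumed commutative):
  product = +, inverse = uminus, identity = 0.  G^omega is the type nat => 'a with the
  pointwise group structure (Function_Algebras) and the product topology (Function_Topology).\<close>

text \<open>Group words in the variables 0,1,2,... built from variables by multiplication
  and inversion.  A word uses finitely many variables, so it is an m-ary word for some m.\<close>
datatype gword = GVar nat | GMul gword gword | GInv gword

primrec wval :: "gword \<Rightarrow> (nat \<Rightarrow> 'g::group_add) \<Rightarrow> 'g" where
  "wval (GVar i) x = x i"
| "wval (GMul u v) x = wval u x + wval v x"
| "wval (GInv u) x = - wval u x"

definition word_image :: "gword \<Rightarrow> 'g::group_add set \<Rightarrow> 'g set" where
  "word_image w A = {wval w x | x. \<forall>i. x i \<in> A}"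

definition is_subgroup :: "'g::group_add set \<Rightarrow> bool" where
  "is_subgroup H \<longleftrightarrow> 0 \<in> H \<and> (\<forall>x\<in>H. \<forall>y\<in>H. x + y \<in> H) \<and> (\<forall>x\<in>H. - x \<in> H)"

definition gen_subgroup :: "'g::group_add set \<Rightarrow> 'g set" where
  "gen_subgroup A = \<Inter>{H. A \<subseteq> H \<and> is_subgroup H}"

definition group_hom :: "('g::group_add \<Rightarrow> 'h::group_add) \<Rightarrow> bool" where
  "group_hom f \<longleftrightarrow> (\<forall>x y. f (x + y) = f x + f y)"

end

theory Submission
  imports Defs
begin


lemma compact_Pi_set:
  fixes S :: "'i \<Rightarrow> 'b::topological_space set"
  assumes "\<And>i. compact (S i)"
  shows "compact {y. \<forall>i. y i \<in> S i}"
proof -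
  have "{y. \<forall>i. y i \<in> S i} = PiE UNIV S" by (auto simp: PiE_UNIV_domain)
  moreover have "compactin (product_topology (\<lambda>i. euclidean) UNIV) (PiE UNIV S)"
    using assms by (simp add: compactin_PiE)
  ultimately show ?thesis by (simp add: euclidean_product_topology)
qed

lemma wval_apply: "wval w a j = wval w (\<lambda>i. a i j)"
  by (induction w) auto

lemma wval_hom:
  assumes "group_hom h"
  shows "wval w (\<lambda>i. h (a i)) = h (wval w a)"
proof -
  have "h (0 + 0) = h 0 + h 0" using assms unfolding group_hom_def by blast
  then have "h 0 + 0 = h 0 + h 0" by simp
  then have h0: "h 0 = 0" using add_left_imp_eq by metis
  have hm: "h (- u) = - h u" for u
  proof -
    have "h (u + - u) = h u + h (- u)" using assms unfolding group_hom_def by blast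
    then have "h u + h (-u) = 0" using h0 by simp
    then show ?thesis using minus_unique by metis
  qed
  show ?thesis using assms by (induction w) (auto simp: group_hom_def hm)
qed

lemma wval_zero: "wval w (\<lambda>i. 0) = 0"
  by (induction w) auto

lemma cont_wval: "continuous_on UNIV (\<lambda>a::nat \<Rightarrow> 'b::topological_group_add. wval w a)"
proof (induction w)
  case (GVar i) then show ?case by simp
next
  case (GMul u v) then show ?case by (simp add: continuous_on_add)
next
  case (GInv u) then show ?case by (simp add: continuous_on_minus)
qed

lemma cont_wval_fun: "continuous_on UNIV (\<lambda>a::nat \<Rightarrow> nat \<Rightarrow> 'b::topological_group_add. wval w a)"
proof (rule continuous_on_coordinatewise_then_product)
  fix j
  have "continuous_on UNIV ((\<lambda>b. wval w b) \<circ> (\<lambda>a::nat \<Rightarrow> nat \<Rightarrow> 'b. \<lambda>i. a i j))"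
  proof (rule continuous_on_compose)
    show "continuous_on UNIV (\<lambda>a::nat \<Rightarrow> nat \<Rightarrow> 'b. \<lambda>i. a i j)"
      by (rule continuous_on_coordinatewise_then_product)
         (rule continuous_on_product_then_coordinatewise, simp)
    show "continuous_on ((\<lambda>a::nat \<Rightarrow> nat \<Rightarrow> 'b. \<lambda>i. a i j) ` UNIV) (\<lambda>b. wval w b)"
      by (rule continuous_on_subset[OF cont_wval]) simp
  qed
  then show "continuous_on UNIV (\<lambda>a::nat \<Rightarrow> nat \<Rightarrow> 'b. wval w a j)"
    by (simp add: o_def wval_apply[of w _ j])
qed



primrec wren :: "(nat \<Rightarrow> nat) \<Rightarrow> gword \<Rightarrow> gword" where
  "wren f (GVar i) = GVar (f i)"
| "wren f (GMul u v) = GMul (wren f u) (wren f v)"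
| "wren f (GInv u) = GInv (wren f u)"

lemma wval_wren: "wval (wren f w) c = wval w (\<lambda>i. c (f i))"
  by (induction w) auto

lemma word_in_subgroup:
  assumes "is_subgroup H" "\<And>i. a i \<in> H"
  shows "wval w a \<in> H"
  using assms by (induction w) (auto simp: is_subgroup_def)

lemma word_imageI: "(\<And>i. a i \<in> A) \<Longrightarrow> wval w a \<in> word_image w A"
  unfolding word_image_def by blast

lemma word_imageE: "z \<in> word_image w A \<Longrightarrow> (\<And>a. z = wval w a \<Longrightarrow> (\<And>i. a i \<in> A) \<Longrightarrow> P) \<Longrightarrow> P"
  unfolding word_image_def by blast

lemma gen_word:
  fixes A :: "'g::group_add set"
  assumes "0 \<in> A"
  shows "gen_subgroup A = {z. \<exists>w. z \<in> word_image w A}"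
proof
  let ?W = "{z. \<exists>w. z \<in> word_image w A}"
  have sub: "is_subgroup ?W"
    unfolding is_subgroup_def
  proof (intro conjI ballI)
    have "wval (GVar 0) (\<lambda>i. 0) \<in> word_image (GVar 0) A" by (rule word_imageI) (simp add: assms)
    then show "0 \<in> ?W" by auto
  next
    fix x y assume "x \<in> ?W" "y \<in> ?W"
    then obtain w1 w2 where "x \<in> word_image w1 A" "y \<in> word_image w2 A" by blast
    then obtain a b where x: "x = wval w1 a" "\<forall>i. a i \<in> A" and y: "y = wval w2 b" "\<forall>i. b i \<in> A"
      by (metis word_imageE)
    define c where "c = (\<lambda>i::nat. if even i then a (i div 2) else b (i div 2))"
    have "wval (GMul (wren (\<lambda>i. 2*i) w1) (wren (\<lambda>i. 2*i+1) w2)) c = x + y"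
      by (simp add: wval_wren c_def x y)
    moreover have "\<forall>i. c i \<in> A" using x y by (simp add: c_def)
    ultimately have "x + y \<in> word_image (GMul (wren (\<lambda>i. 2*i) w1) (wren (\<lambda>i. 2*i+1) w2)) A"
      using word_imageI by metis
    then show "x + y \<in> ?W" by blast
  next
    fix x assume "x \<in> ?W"
    then obtain w1 where "x \<in> word_image w1 A" by blast
    then obtain a where x: "x = wval w1 a" "\<forall>i. a i \<in> A"
      by (metis word_imageE)
    then have "- x = wval (GInv w1) a" by simp
    moreover have "wval (GInv w1) a \<in> word_image (GInv w1) A" using x by (intro word_imageI) auto
    ultimately show "- x \<in> ?W" by auto
  qed
  have "A \<subseteq> ?W"
  proof
    fix z assume "z \<in> A"
    then have "wval (GVar 0) (\<lambda>i. z) \<in> word_image (GVar 0) A" by (intro word_imageI) auto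
    then show "z \<in> ?W" by auto
  qed
  with sub show "gen_subgroup A \<subseteq> ?W" unfolding gen_subgroup_def by blast
next
  show "{z. \<exists>w. z \<in> word_image w A} \<subseteq> gen_subgroup A"
  proof
    fix z assume "z \<in> {z. \<exists>w. z \<in> word_image w A}"
    then obtain w where "z \<in> word_image w A" by blast
    then obtain a where z: "z = wval w a" "\<And>i. a i \<in> A" by (metis word_imageE)
    show "z \<in> gen_subgroup A" unfolding gen_subgroup_def
    proof
      fix H assume "H \<in> {H. A \<subseteq> H \<and> is_subgroup H}"
      then show "z \<in> H" using z word_in_subgroup[of H a w] by blast
    qed
  qed
qed

lemma gen_insert0: "gen_subgroup (insert 0 A) = gen_subgroup (A::'g::group_add set)"
proof -
  have "{H. insert 0 A \<subseteq> H \<and> is_subgroup H} = {H. A \<subseteq> H \<and> is_subgroup H}"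
    unfolding is_subgroup_def by auto
  then show ?thesis unfolding gen_subgroup_def by simp
qed

definition boxl :: "'a set list \<Rightarrow> (nat \<Rightarrow> 'a::zero) set" where
  "boxl vs = {y. \<forall>i. y i \<in> (if i < length vs then vs!i else {0})}"

definition atoms :: "'a::topological_space set set \<Rightarrow> 'a set set" where
  "atoms Bas = {closure V | V. V \<in> Bas \<and> compact (closure V)}"

definition unions :: "'a::{topological_space,zero} set set \<Rightarrow> (nat \<Rightarrow> 'a) set set" where
  "unions Bas = {\<Union>E | E. finite E \<and> E \<subseteq> boxl ` lists (atoms Bas)}"

definition fam :: "'a::{topological_space,zero} set set \<Rightarrow> (nat \<Rightarrow> 'a) set set" where
  "fam Bas = {\<Inter>D | D. finite D \<and> D \<noteq> {} \<and> D \<subseteq> unions Bas}"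

lemma countable_fam: "countable Bas \<Longrightarrow> countable (fam Bas)"
proof -
  assume "countable Bas"
  moreover have "atoms Bas \<subseteq> closure ` Bas" unfolding atoms_def by blast
  ultimately have "countable (atoms Bas)" by (meson countable_image countable_subset)
  then have "countable (boxl ` lists (atoms Bas))" by (intro countable_image countable_lists)
  then have "countable (Union ` {E. finite E \<and> E \<subseteq> boxl ` lists (atoms Bas)})"
    by (rule countable_image[OF countable_Collect_finite_subset])
  moreover have "unions Bas = Union ` {E. finite E \<and> E \<subseteq> boxl ` lists (atoms Bas)}"
    unfolding unions_def by auto
  ultimately have "countable (unions Bas)" by simp
  then have "countable (Inter ` {D. finite D \<and> D \<subseteq> unions Bas})"
    by (rule countable_image[OF countable_Collect_finite_subset])
  moreover have "fam Bas \<subseteq> Inter ` {D. finite D \<and> D \<subseteq> unions Bas}"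
    unfolding fam_def by auto
  ultimately show ?thesis by (rule countable_subset[rotated])
qed

lemma compact_boxl:
  assumes "vs \<in> lists (atoms Bas)"
  shows "compact (boxl vs :: (nat \<Rightarrow> 'a::{topological_space,zero}) set)"
  unfolding boxl_def
proof (rule compact_Pi_set)
  fix i
  have "i < length vs \<Longrightarrow> vs ! i \<in> atoms Bas" using assms nth_mem by (metis in_listsD)
  then show "compact (if i < length vs then vs ! i else {0::'a})"
    by (auto simp: atoms_def)
qed

lemma compact_fam:
  fixes Bas :: "'a::{metric_space,zero} set set"
  assumes "B \<in> fam Bas" shows "compact B"
proof -
  have u: "compact U" if "U \<in> unions Bas" for U
    using that unfolding unions_def by (auto intro!: compact_Union compact_boxl)
  obtain D where D: "B = \<Inter>D" "finite D" "D \<noteq> {}" "D \<subseteq> unions Bas"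
    using assms unfolding fam_def by blast
  then obtain D0 where "D0 \<in> D" by blast
  then have "B = D0 \<inter> \<Inter>D" using D by blast
  moreover have "compact D0" using u \<open>D0 \<in> D\<close> D by blast
  moreover have "closed (\<Inter>D)" using u D by (intro closed_Inter) (auto intro: compact_imp_closed)
  ultimately show ?thesis by (simp add: compact_Int_closed)
qed

lemma fam_Int: "B1 \<in> fam Bas \<Longrightarrow> B2 \<in> fam Bas \<Longrightarrow> B1 \<inter> B2 \<in> fam Bas"
proof -
  assume "B1 \<in> fam Bas" "B2 \<in> fam Bas"
  then obtain D1 D2 where "B1 = \<Inter>D1" "finite D1" "D1 \<noteq> {}" "D1 \<subseteq> unions Bas"
    "B2 = \<Inter>D2" "finite D2" "D2 \<noteq> {}" "D2 \<subseteq> unions Bas" unfolding fam_def by blast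
  then have "B1 \<inter> B2 = \<Inter>(D1 \<union> D2) \<and> finite (D1 \<union> D2) \<and> D1 \<union> D2 \<noteq> {} \<and> D1 \<union> D2 \<subseteq> unions Bas"
    by auto
  then show ?thesis unfolding fam_def by blast
qed

lemma fam_Inter: "finite F \<Longrightarrow> F \<noteq> {} \<Longrightarrow> F \<subseteq> fam Bas \<Longrightarrow> \<Inter>F \<in> fam Bas"
proof (induction F rule: finite_ne_induct)
  case (singleton x) then show ?case by simp
next
  case (insert x F) then show ?case using fam_Int by auto
qed

lemma loc_basis:
  fixes Bas :: "'a::metric_space set set"
  assumes tb: "topological_basis Bas" and lc: "locally_compact_space (euclidean :: 'a topology)"
    and "open Ob" "p \<in> Ob"
  shows "\<exists>V\<in>Bas. p \<in> V \<and> closure V \<subseteq> Ob \<and> compact (closure V)"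
proof -
  have "\<exists>U K. openin euclidean U \<and> compactin euclidean K \<and> p \<in> U \<and> U \<subseteq> K"
    using lc unfolding locally_compact_space_def topspace_euclidean by blast
  then obtain U K where UK0: "openin euclidean U" "compactin euclidean K" "p \<in> U" "U \<subseteq> K"
    by blast
  have UK: "open U" "compact K" "p \<in> U" "U \<subseteq> K" using UK0 open_openin compactin_euclidean_iff by metis+
  have "open (Ob \<inter> U)" "p \<in> Ob \<inter> U" using UK assms by auto
  then obtain e where e: "e > 0" "cball p e \<subseteq> Ob \<inter> U" using open_contains_cball by blast
  have "p \<in> ball p e" using e by simp
  then obtain V where V: "V \<in> Bas" "p \<in> V" "V \<subseteq> ball p e"
    using topological_basisE[OF tb open_ball[of p e]] by metis
  have "closure V \<subseteq> cball p e"
    by (rule closure_minimal) (use V ball_subset_cball in auto)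
  then have c: "closure V \<subseteq> Ob" "closure V \<subseteq> K" using e UK by auto
  have "compact (K \<inter> closure V)" using UK(2) by (intro compact_Int_closed) auto
  moreover have "K \<inter> closure V = closure V" using c by blast
  ultimately have "compact (closure V)" by simp
  with V c show ?thesis by blast
qed

lemma point_box:
  fixes Bas :: "'a::{metric_space,zero} set set"
  assumes tb: "topological_basis Bas" and lc: "locally_compact_space (euclidean :: 'a topology)"
    and W: "open W" "p \<in> W" and pz: "\<And>i. i \<ge> n \<Longrightarrow> p i = 0"
  shows "\<exists>Ob vs. open Ob \<and> p \<in> Ob \<and> Ob \<inter> {y. \<forall>i\<ge>n. y i = 0} \<subseteq> boxl vs \<and> boxl vs \<subseteq> W
           \<and> vs \<in> lists (atoms Bas)"
proof -
  have "openin (product_topology (\<lambda>i. euclidean) UNIV) W" using W by (simp add: open_fun_def)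
  from product_topology_open_contains_basis[OF this W(2)]
  obtain X where X: "p \<in> PiE UNIV X" "\<And>i. open (X i)" "PiE UNIV X \<subseteq> W"
    by auto
  have "\<forall>i. \<exists>V\<in>Bas. p i \<in> V \<and> closure V \<subseteq> X i \<and> compact (closure V)"
  proof
    fix i
    have "p i \<in> X i" using X(1) by (auto simp: PiE_UNIV_domain)
    then show "\<exists>V\<in>Bas. p i \<in> V \<and> closure V \<subseteq> X i \<and> compact (closure V)"
      using loc_basis[OF tb lc X(2)] by blast
  qed
  then obtain V where V: "\<And>i. V i \<in> Bas" "\<And>i. p i \<in> V i" "\<And>i. closure (V i) \<subseteq> X i"
    "\<And>i. compact (closure (V i))" by metis
  define vs where "vs = map (\<lambda>i. closure (V i)) [0..<n]"
  define Ob where "Ob = {f. \<forall>i\<in>{..<n}. f (id i) \<in> V i}"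
  have "open Ob" unfolding Ob_def
    by (rule product_topology_basis') (use V(1) tb topological_basis_open in auto)
  moreover have "p \<in> Ob" using V unfolding Ob_def by auto
  moreover have "Ob \<inter> {y. \<forall>i\<ge>n. y i = 0} \<subseteq> boxl vs"
    unfolding Ob_def boxl_def vs_def using closure_subset by fastforce
  moreover have "boxl vs \<subseteq> W"
  proof
    fix y assume "y \<in> boxl vs"
    have "y i \<in> X i" for i
    proof (cases "i < n")
      case True
      have "y i \<in> (if i < length vs then vs!i else {0})" using \<open>y \<in> boxl vs\<close> unfolding boxl_def by blast
      then show ?thesis using True V(3)[of i] unfolding vs_def by auto
    next
      case False
      have "y i \<in> (if i < length vs then vs!i else {0})" using \<open>y \<in> boxl vs\<close> unfolding boxl_def by blast
      then have "y i = 0" using False unfolding vs_def by auto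
      moreover have "p i \<in> X i" using X(1) by (auto simp: PiE_UNIV_domain)
      ultimately show ?thesis using pz[of i] False by simp
    qed
    then have "y \<in> PiE UNIV X" by (auto simp: PiE_UNIV_domain)
    then show "y \<in> W" using X(3) by blast
  qed
  moreover have "closure (V i) \<in> atoms Bas" for i using V unfolding atoms_def by blast
  then have "vs \<in> lists (atoms Bas)" unfolding vs_def by auto
  ultimately show ?thesis by blast
qed

lemma fam_approx:
  fixes Bas :: "'a::{metric_space,zero} set set"
  assumes tb: "topological_basis Bas" and lc: "locally_compact_space (euclidean :: 'a topology)"
    and L: "compact L" "L \<subseteq> {y. \<forall>i\<ge>n. y i = 0}" and W: "open W" "L \<subseteq> W"
  shows "\<exists>B\<in>fam Bas. L \<subseteq> B \<and> B \<subseteq> W"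
proof -
  have "\<forall>p\<in>L. \<exists>Ob vs. open Ob \<and> p \<in> Ob \<and> Ob \<inter> {y. \<forall>i\<ge>n. y i = 0} \<subseteq> boxl vs \<and> boxl vs \<subseteq> W
           \<and> vs \<in> lists (atoms Bas)"
    using point_box[OF tb lc W(1)] W(2) L(2) by blast
  from bchoice[OF this] obtain Ob where "\<forall>p\<in>L. \<exists>vs. open (Ob p) \<and> p \<in> Ob p \<and> Ob p \<inter> {y. \<forall>i\<ge>n. y i = 0} \<subseteq> boxl vs
     \<and> boxl vs \<subseteq> W \<and> vs \<in> lists (atoms Bas)" by blast
  from bchoice[OF this] obtain vs where Ov': "\<forall>p\<in>L. open (Ob p) \<and> p \<in> Ob p \<and> Ob p \<inter> {y. \<forall>i\<ge>n. y i = 0} \<subseteq> boxl (vs p)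
     \<and> boxl (vs p) \<subseteq> W \<and> vs p \<in> lists (atoms Bas)" by blast
  then have Ov: "\<And>p. p \<in> L \<Longrightarrow> open (Ob p) \<and> p \<in> Ob p \<and> Ob p \<inter> {y. \<forall>i\<ge>n. y i = 0} \<subseteq> boxl (vs p)
     \<and> boxl (vs p) \<subseteq> W \<and> vs p \<in> lists (atoms Bas)" by blast
  obtain P where P: "P \<subseteq> L" "finite P" "L \<subseteq> (\<Union>p\<in>P. Ob p)"
  proof (rule compactE_image[OF L(1), of L Ob])
    show "\<And>T. T \<in> L \<Longrightarrow> open (Ob T)" using Ov by blast
    show "L \<subseteq> (\<Union>c\<in>L. Ob c)" using Ov by blast
    fix C' assume "C' \<subseteq> L" "finite C'" "L \<subseteq> (\<Union>c\<in>C'. Ob c)"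
    then show thesis using that by blast
  qed
  define B where "B = \<Union>((\<lambda>p. boxl (vs p)) ` P)"
  have E: "finite ((\<lambda>p. boxl (vs p)) ` P)" "(\<lambda>p. boxl (vs p)) ` P \<subseteq> boxl ` lists (atoms Bas)"
    using P Ov by auto
  have "B \<in> unions Bas" unfolding unions_def B_def
    by (intro CollectI exI[of _ "(\<lambda>p. boxl (vs p)) ` P"]) (use E in auto)
  then have "\<Inter>{B} \<in> fam Bas" unfolding fam_def
    by (intro CollectI exI[of _ "{B}"]) auto
  moreover have "L \<subseteq> B"
  proof
    fix l assume l: "l \<in> L"
    then obtain p where p: "p \<in> P" "l \<in> Ob p" using P(3) by blast
    then have "l \<in> boxl (vs p)" using Ov[of p] P(1) L(2) l by blast
    then show "l \<in> B" using p unfolding B_def by blast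
  qed
  moreover have "B \<subseteq> W" using P(1) Ov unfolding B_def by blast
  ultimately show ?thesis by auto
qed


definition trunc :: "nat \<Rightarrow> (nat \<Rightarrow> 'a::zero) \<Rightarrow> nat \<Rightarrow> 'a" where
  "trunc n x = (\<lambda>i. if i < n then x i else 0)"

lemma trunc_hom: "group_hom (trunc n :: (nat \<Rightarrow> 'a::group_add) \<Rightarrow> _)"
  unfolding group_hom_def trunc_def by (auto simp: fun_eq_iff)

lemma cont_trunc: "continuous_on UNIV (trunc n :: (nat \<Rightarrow> 'a::{topological_space,zero}) \<Rightarrow> _)"
  unfolding trunc_def
proof (rule continuous_on_coordinatewise_then_product)
  fix i show "continuous_on UNIV (\<lambda>x::nat \<Rightarrow> 'a. if i < n then x i else 0)"
    by (cases "i < n") simp_all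
qed

lemma closed_coord_in: "closed B \<Longrightarrow> closed {a::nat \<Rightarrow> 'b::topological_space. a i \<in> B}"
proof -
  assume "closed B"
  then have "closed ((\<lambda>a::nat \<Rightarrow> 'b. a i) -` B \<inter> UNIV)"
    using continuous_on_closed_vimage[OF closed_UNIV, of "\<lambda>a::nat \<Rightarrow> 'b. a i"] by simp
  moreover have "(\<lambda>a::nat \<Rightarrow> 'b. a i) -` B \<inter> UNIV = {a. a i \<in> B}" by auto
  ultimately show ?thesis by simp
qed

lemma prod_word:
  fixes Bs :: "nat \<Rightarrow> (nat \<Rightarrow> 'a::group_add) set"
  shows "y \<in> word_image w {z. \<forall>r. (\<lambda>m. z (prod_encode (r,m))) \<in> Bs r} \<longleftrightarrow>
         (\<forall>r. (\<lambda>m. y (prod_encode (r,m))) \<in> word_image w (Bs r))"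
proof
  assume "y \<in> word_image w {z. \<forall>r. (\<lambda>m. z (prod_encode (r,m))) \<in> Bs r}"
  then obtain a where a: "y = wval w a" "\<And>i. a i \<in> {z. \<forall>r. (\<lambda>m. z (prod_encode (r,m))) \<in> Bs r}"
    by (rule word_imageE) blast
  show "\<forall>r. (\<lambda>m. y (prod_encode (r,m))) \<in> word_image w (Bs r)"
  proof
    fix r
    have "(\<lambda>m. y (prod_encode (r,m))) = wval w (\<lambda>i. (\<lambda>m. a i (prod_encode (r,m))))"
    proof (rule ext)
      fix m
      have "y (prod_encode (r,m)) = wval w (\<lambda>i. a i (prod_encode (r,m)))"
        unfolding a(1) by (rule wval_apply)
      also have "\<dots> = wval w (\<lambda>i m. a i (prod_encode (r,m))) m"
        by (rule wval_apply[symmetric])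
      finally show "y (prod_encode (r,m)) = wval w (\<lambda>i m. a i (prod_encode (r,m))) m" .
    qed
    also have "\<dots> \<in> word_image w (Bs r)"
    proof (rule word_imageI)
      fix i show "(\<lambda>m. a i (prod_encode (r,m))) \<in> Bs r" using a(2)[of i] by simp
    qed
    finally show "(\<lambda>m. y (prod_encode (r,m))) \<in> word_image w (Bs r)" .
  qed
next
  assume H: "\<forall>r. (\<lambda>m. y (prod_encode (r,m))) \<in> word_image w (Bs r)"
  have "\<forall>r. \<exists>b. (\<forall>i. b i \<in> Bs r) \<and> wval w b = (\<lambda>m. y (prod_encode (r,m)))"
  proof
    fix r show "\<exists>b. (\<forall>i. b i \<in> Bs r) \<and> wval w b = (\<lambda>m. y (prod_encode (r,m)))"
    proof -
      obtain b where "(\<lambda>m. y (prod_encode (r,m))) = wval w b" "\<And>i. b i \<in> Bs r"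
        using H[rule_format, of r] by (rule word_imageE) blast
      then show ?thesis by (intro exI[of _ b]) simp
    qed
  qed
  from choice[OF this] obtain b where b0: "\<forall>r. (\<forall>i. b r i \<in> Bs r) \<and> wval w (b r) = (\<lambda>m. y (prod_encode (r,m)))"
    by blast
  then have b: "\<And>r i. b r i \<in> Bs r" "\<And>r. wval w (b r) = (\<lambda>m. y (prod_encode (r,m)))"
    by blast+
  define a where "a = (\<lambda>i j. case prod_decode j of (r, m) \<Rightarrow> b r i m)"
  have Ra: "(\<lambda>m. a i (prod_encode (r,m))) = b r i" for i r
    by (simp add: a_def)
  have wa: "wval w a = y"
  proof
    fix j
    obtain r m where j: "prod_decode j = (r, m)" by fastforce
    then have j': "j = prod_encode (r, m)" by (metis prod_decode_inverse)
    have "wval w a j = wval w (\<lambda>i. a i j)" by (rule wval_apply)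
    also have "\<dots> = wval w (\<lambda>i. b r i m)" by (simp add: a_def j)
    also have "\<dots> = wval w (b r) m" by (rule wval_apply[symmetric])
    also have "\<dots> = y j" using b(2)[of r] j' by simp
    finally show "wval w a j = y j" .
  qed
  have "wval w a \<in> word_image w {z. \<forall>r. (\<lambda>m. z (prod_encode (r,m))) \<in> Bs r}"
  proof (rule word_imageI)
    fix i show "a i \<in> {z. \<forall>r. (\<lambda>m. z (prod_encode (r,m))) \<in> Bs r}"
      unfolding mem_Collect_eq Ra using b(1) by blast
  qed
  then show "y \<in> word_image w {z. \<forall>r. (\<lambda>m. z (prod_encode (r,m))) \<in> Bs r}"
    unfolding wa .
qed

lemma compact_prod_set:
  fixes Bs :: "nat \<Rightarrow> (nat \<Rightarrow> 'a::topological_space) set"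
  assumes "\<And>r. compact (Bs r)"
  shows "compact {z. \<forall>r. (\<lambda>m. z (prod_encode (r,m))) \<in> Bs r}"
proof -
  define g where "g = (\<lambda>(b::nat \<Rightarrow> nat \<Rightarrow> 'a) j. case prod_decode j of (r, m) \<Rightarrow> b r m)"
  have "continuous_on UNIV g" unfolding g_def
  proof (rule continuous_on_coordinatewise_then_product)
    fix j
    obtain r m where j: "prod_decode j = (r, m)" by fastforce
    have "continuous_on UNIV (\<lambda>b::nat \<Rightarrow> nat \<Rightarrow> 'a. b r m)"
      by (rule continuous_on_product_then_coordinatewise[OF continuous_on_product_coordinates])
    then show "continuous_on UNIV (\<lambda>b::nat \<Rightarrow> nat \<Rightarrow> 'a. case prod_decode j of (r, m) \<Rightarrow> b r m)"
      by (simp add: j)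
  qed
  moreover have "compact {b::nat \<Rightarrow> nat \<Rightarrow> 'a. \<forall>r. b r \<in> Bs r}" by (rule compact_Pi_set) (rule assms)
  ultimately have "compact (g ` {b. \<forall>r. b r \<in> Bs r})"
    by (meson compact_continuous_image continuous_on_subset subset_UNIV)
  moreover have "g ` {b. \<forall>r. b r \<in> Bs r} = {z. \<forall>r. (\<lambda>m. z (prod_encode (r,m))) \<in> Bs r}"
  proof
    show "g ` {b. \<forall>r. b r \<in> Bs r} \<subseteq> {z. \<forall>r. (\<lambda>m. z (prod_encode (r,m))) \<in> Bs r}"
      by (auto simp: g_def)
  next
    show "{z. \<forall>r. (\<lambda>m. z (prod_encode (r,m))) \<in> Bs r} \<subseteq> g ` {b. \<forall>r. b r \<in> Bs r}"
    proof
      fix z assume z: "z \<in> {z. \<forall>r. (\<lambda>m. z (prod_encode (r,m))) \<in> Bs r}"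
      have "g (\<lambda>r m. z (prod_encode (r, m))) = z"
        by (rule ext) (simp add: g_def case_prod_beta prod_decode_inverse)
      moreover have "(\<lambda>r m. z (prod_encode (r, m))) \<in> {b. \<forall>r. b r \<in> Bs r}" using z by simp
      ultimately show "z \<in> g ` {b. \<forall>r. b r \<in> Bs r}" by (rule image_eqI[OF sym])
    qed
  qed
  ultimately show ?thesis by simp
qed


lemma trunc_eq_iff: "trunc n u = trunc n x \<longleftrightarrow> (\<forall>j<n. u j = x j)"
  unfolding trunc_def by (auto simp: fun_eq_iff)

lemma step2:
  fixes K :: "(nat \<Rightarrow> 'a::{topological_group_add,metric_space}) set"
  assumes K: "compact K" and H: "\<And>n. trunc n x \<in> word_image w (trunc n ` K)"
  shows "x \<in> word_image w K"
proof -
  have ex: "\<exists>a. (\<forall>i. a i \<in> K) \<and> (\<forall>j<n. wval w a j = x j)" for n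
  proof -
    obtain b' where b': "trunc n x = wval w b'" "\<And>i. b' i \<in> trunc n ` K"
      using H[of n] by (rule word_imageE) blast
    have "\<forall>i. \<exists>k. k \<in> K \<and> b' i = trunc n k" using b'(2) by blast
    from choice[OF this] obtain b where b0: "\<forall>i. b i \<in> K \<and> b' i = trunc n (b i)" by blast
    then have b: "\<And>i. b i \<in> K" "\<And>i. b' i = trunc n (b i)" by blast+
    have "trunc n (wval w b) = wval w (\<lambda>i. trunc n (b i))" by (rule wval_hom[OF trunc_hom, symmetric])
    also have "\<dots> = trunc n x"
    proof -
      have "b' = (\<lambda>i. trunc n (b i))" using b(2) by (rule ext)
      then show ?thesis using b'(1) by simp
    qed
    finally have "\<forall>j<n. wval w b j = x j" unfolding trunc_eq_iff .
    then show ?thesis using b(1) by blast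
  qed
  define C where "C = {a::nat \<Rightarrow> nat \<Rightarrow> 'a. \<forall>i. a i \<in> K}"
  define A where "A = (\<lambda>n. \<Inter>j\<in>{..<n}. {a::nat \<Rightarrow> nat \<Rightarrow> 'a. wval w a j = x j})"
  have cC: "compact C" unfolding C_def by (rule compact_Pi_set) (rule K)
  have clA: "closed (A n)" for n
    unfolding A_def
  proof (intro closed_INT ballI)
    fix j
    show "closed {a::nat \<Rightarrow> nat \<Rightarrow> 'a. wval w a j = x j}"
    proof (rule closed_Collect_eq)
      show "continuous_on UNIV (\<lambda>a::nat \<Rightarrow> nat \<Rightarrow> 'a. wval w a j)"
        by (rule continuous_on_product_then_coordinatewise[OF cont_wval_fun])
      show "continuous_on UNIV (\<lambda>a::nat \<Rightarrow> nat \<Rightarrow> 'a. x j)" by (rule continuous_on_const)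
    qed
  qed
  have fipA: "C \<inter> (\<Inter>i\<in>I'. A i) \<noteq> {}" if "finite I'" for I'
  proof -
    have "\<exists>m. \<forall>i\<in>I'. i \<le> m" using that finite_nat_set_iff_bounded_le by auto
    then obtain N where N: "\<And>i. i \<in> I' \<Longrightarrow> i \<le> N" by auto
    obtain a where a: "\<forall>i. a i \<in> K" "\<forall>j<N. wval w a j = x j" using ex[of N] by auto
    have "a \<in> C" using a(1) unfolding C_def by simp
    moreover have "a \<in> A i" if "i \<in> I'" for i
    proof -
      have "\<forall>j<i. wval w a j = x j" using a(2) N[OF that] by auto
      then show ?thesis unfolding A_def by auto
    qed
    ultimately have "a \<in> C \<inter> (\<Inter>i\<in>I'. A i)" by blast
    then show ?thesis by blast
  qed
  have "C \<inter> (\<Inter>i\<in>UNIV. A i) \<noteq> {}"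
    by (rule compact_imp_fip_image[OF cC]) (rule clA, rule fipA, assumption)
  then obtain a where a: "a \<in> C" "\<And>n. a \<in> A n" by blast
  have "wval w a = x"
  proof
    fix j show "wval w a j = x j" using a(2)[of "Suc j"] unfolding A_def by simp
  qed
  moreover have "wval w a \<in> word_image w K" by (rule word_imageI) (use a(1) in \<open>simp add: C_def\<close>)
  ultimately show ?thesis by simp
qed

lemma step1:
  fixes Bas :: "'a::{polish_space,topological_group_add} set set"
  assumes tb: "topological_basis Bas" and lc: "locally_compact_space (euclidean :: 'a topology)"
    and L: "compact L" "L \<subseteq> {y. \<forall>i\<ge>n. y i = 0}"
    and H: "\<And>B. B \<in> fam Bas \<Longrightarrow> L \<subseteq> B \<Longrightarrow> y \<in> word_image w B"
  shows "y \<in> word_image w L"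
proof -
  define S where "S = {B \<in> fam Bas. L \<subseteq> B}"
  obtain B0 where B0: "B0 \<in> fam Bas" "L \<subseteq> B0"
    using fam_approx[OF tb lc L open_UNIV subset_UNIV] by blast
  then have B0S: "B0 \<in> S" unfolding S_def by blast
  define C where "C = {a::nat \<Rightarrow> nat \<Rightarrow> 'a. \<forall>i. a i \<in> B0}"
  define f where "f = (\<lambda>B. {a::nat \<Rightarrow> nat \<Rightarrow> 'a. (\<forall>i. a i \<in> B) \<and> wval w a = y})"
  have cS: "compact B" if "B \<in> S" for B using that compact_fam unfolding S_def by blast
  have cC: "compact C" unfolding C_def by (rule compact_Pi_set) (rule cS[OF B0S])
  have clf: "closed (f B)" if "B \<in> S" for B
    unfolding f_def
  proof (rule closed_Collect_conj)
    have "closed B" using cS[OF that] by (rule compact_imp_closed)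
    then show "closed {a::nat \<Rightarrow> nat \<Rightarrow> 'a. \<forall>i. a i \<in> B}"
      by (intro closed_Collect_all closed_coord_in)
    show "closed {a::nat \<Rightarrow> nat \<Rightarrow> 'a. wval w a = y}"
    proof (rule closed_Collect_eq)
      show "continuous_on UNIV (\<lambda>a::nat \<Rightarrow> nat \<Rightarrow> 'a. wval w a)" by (rule cont_wval_fun)
      show "continuous_on UNIV (\<lambda>a::nat \<Rightarrow> nat \<Rightarrow> 'a. y)" by (rule continuous_on_const)
    qed
  qed
  have fipf: "C \<inter> (\<Inter>B\<in>S'. f B) \<noteq> {}" if "finite S'" "S' \<subseteq> S" for S'
  proof -
    have "\<Inter>(insert B0 S') \<in> fam Bas"
    proof (rule fam_Inter)
      show "finite (insert B0 S')" using that(1) by simp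
      show "insert B0 S' \<noteq> {}" by simp
      show "insert B0 S' \<subseteq> fam Bas" using that(2) B0(1) unfolding S_def by blast
    qed
    moreover have "L \<subseteq> \<Inter>(insert B0 S')" using that(2) B0(2) unfolding S_def by blast
    ultimately have "y \<in> word_image w (\<Inter>(insert B0 S'))" by (rule H)
    then obtain a where a: "y = wval w a" "\<And>i. a i \<in> \<Inter>(insert B0 S')" by (rule word_imageE) blast
    have "a \<in> C" using a(2) unfolding C_def by blast
    moreover have "a \<in> f B" if "B \<in> S'" for B using a that unfolding f_def by blast
    ultimately show ?thesis by blast
  qed
  have "C \<inter> (\<Inter>B\<in>S. f B) \<noteq> {}"
    by (rule compact_imp_fip_image[OF cC]) (rule clf, assumption, rule fipf, assumption+)
  then obtain a where a: "\<And>B. B \<in> S \<Longrightarrow> a \<in> f B" by blast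
  have wa: "wval w a = y" using a[OF B0S] unfolding f_def by blast
  have aL: "a i \<in> L" for i
  proof (rule ccontr)
    assume nL: "a i \<notin> L"
    have "open (- {a i})" by (rule open_Compl) simp
    moreover have "L \<subseteq> - {a i}" using nL by blast
    ultimately obtain B where B: "B \<in> fam Bas" "L \<subseteq> B" "B \<subseteq> - {a i}"
      using fam_approx[OF tb lc L] by blast
    then have "a \<in> f B" using a unfolding S_def by blast
    then have "a i \<in> B" unfolding f_def by blast
    then show False using B(3) by blast
  qed
  have "wval w a \<in> word_image w L" by (rule word_imageI) (rule aL)
  then show ?thesis unfolding wa .
qed


lemma part1:
  fixes G_witness :: "'a::{topological_group_add, polish_space}"
  assumes lc: "locally_compact_space (euclidean :: 'a topology)"
  shows "\<exists>K0 :: (nat \<Rightarrow> 'a) set. compact K0 \<and> 0 \<in> K0 \<and>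
    (\<forall>K :: (nat \<Rightarrow> 'a) set. compact K \<and> 0 \<in> K \<longrightarrow>
       (\<exists>\<phi> :: (nat \<Rightarrow> 'a) \<Rightarrow> (nat \<Rightarrow> 'a). continuous_on UNIV \<phi> \<and> group_hom \<phi> \<and>
          (\<forall>w. \<phi> -` word_image w K0 = word_image w K)))"
proof -
  obtain Bas :: "'a set set" where Bas: "countable Bas" "topological_basis Bas"
    using ex_countable_basis by blast
  define PP where "PP = (UNIV :: nat set) \<times> {B \<in> fam Bas. (0::nat \<Rightarrow> 'a) \<in> B}"
  have cPP: "countable PP" unfolding PP_def using countable_fam[OF Bas(1)] by auto
  obtain B00 where B00: "B00 \<in> fam Bas" "{0::nat \<Rightarrow> 'a} \<subseteq> B00"
    using fam_approx[OF Bas(2) lc, of "{0}" 0 UNIV] by auto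
  then have "(0, B00) \<in> PP" unfolding PP_def by auto
  then have PPne: "PP \<noteq> {}" by blast
  define nr where "nr = (\<lambda>r. fst (from_nat_into PP r))"
  define Br where "Br = (\<lambda>r. snd (from_nat_into PP r))"
  have BrF: "Br r \<in> fam Bas" "0 \<in> Br r" for r
    using from_nat_into[OF PPne, of r] unfolding Br_def PP_def by auto
  have surjP: "\<exists>r. nr r = n \<and> Br r = B" if "B \<in> fam Bas" "0 \<in> B" for n B
  proof -
    have "(n, B) \<in> PP" using that unfolding PP_def by auto
    then obtain r where "from_nat_into PP r = (n, B)" using from_nat_into_surj[OF cPP] by blast
    then show ?thesis unfolding nr_def Br_def by (intro exI[of _ r]) simp
  qed
  define K0 where "K0 = {z::nat \<Rightarrow> 'a. \<forall>r. (\<lambda>m. z (prod_encode (r,m))) \<in> Br r}"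
  have "compact K0" unfolding K0_def
    by (rule compact_prod_set) (rule compact_fam[OF BrF(1)])
  moreover have "0 \<in> K0" unfolding K0_def using BrF(2) by (simp add: zero_fun_def)
  moreover have "\<exists>\<phi> :: (nat \<Rightarrow> 'a) \<Rightarrow> (nat \<Rightarrow> 'a). continuous_on UNIV \<phi> \<and> group_hom \<phi> \<and>
          (\<forall>w. \<phi> -` word_image w K0 = word_image w K)" if K: "compact K" "0 \<in> K" for K
  proof -
    define S where "S = {r. trunc (nr r) ` K \<subseteq> Br r}"
    define \<phi> where "\<phi> = (\<lambda>(x::nat \<Rightarrow> 'a) j. if fst (prod_decode j) \<in> S
                     then trunc (nr (fst (prod_decode j))) x (snd (prod_decode j)) else 0)"
    have Rphi: "(\<lambda>m. \<phi> x (prod_encode (r,m))) = (if r \<in> S then trunc (nr r) x else 0)" for x r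
      unfolding \<phi>_def by (auto simp: fun_eq_iff)
    have "continuous_on UNIV \<phi>" unfolding \<phi>_def trunc_def
    proof (rule continuous_on_coordinatewise_then_product)
      fix j
      show "continuous_on UNIV (\<lambda>x::nat \<Rightarrow> 'a. if fst (prod_decode j) \<in> S then
              (if snd (prod_decode j) < nr (fst (prod_decode j)) then x (snd (prod_decode j)) else 0) else 0)"
        by (cases "fst (prod_decode j) \<in> S"; cases "snd (prod_decode j) < nr (fst (prod_decode j))") simp_all
    qed
    moreover have "group_hom \<phi>" unfolding group_hom_def \<phi>_def trunc_def by (auto simp: fun_eq_iff)
    moreover have "\<phi> -` word_image w K0 = word_image w K" for w
    proof (rule set_eqI)
      fix x
      have "x \<in> \<phi> -` word_image w K0 \<longleftrightarrow> (\<forall>r. (\<lambda>m. \<phi> x (prod_encode (r,m))) \<in> word_image w (Br r))"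
        unfolding K0_def by (simp add: prod_word)
      also have "\<dots> \<longleftrightarrow> (\<forall>r\<in>S. trunc (nr r) x \<in> word_image w (Br r))"
      proof -
        have "0 \<in> word_image w (Br r)" for r
        proof -
          have "wval w (\<lambda>i. 0) \<in> word_image w (Br r)" by (rule word_imageI) (rule BrF(2))
          then show ?thesis by (simp add: wval_zero)
        qed
        then show ?thesis unfolding Rphi by auto
      qed
      also have "\<dots> \<longleftrightarrow> x \<in> word_image w K"
      proof
        assume H: "\<forall>r\<in>S. trunc (nr r) x \<in> word_image w (Br r)"
        show "x \<in> word_image w K"
        proof (rule step2[OF K(1)])
          fix n
          show "trunc n x \<in> word_image w (trunc n ` K)"
          proof (rule step1[OF Bas(2) lc])
            show "compact (trunc n ` K)"
              by (rule compact_continuous_image[OF continuous_on_subset[OF cont_trunc subset_UNIV] K(1)])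
            show "trunc n ` K \<subseteq> {y. \<forall>i\<ge>n. y i = 0}" by (auto simp: trunc_def)
            fix B assume B: "B \<in> fam Bas" "trunc n ` K \<subseteq> B"
            have "0 \<in> B" using B(2) K(2) by (force simp: trunc_def zero_fun_def)
            then obtain r where r: "nr r = n" "Br r = B" using surjP[OF B(1)] by blast
            then have "r \<in> S" using B(2) unfolding S_def by simp
            then show "trunc n x \<in> word_image w B" using H r by auto
          qed
        qed
      next
        assume "x \<in> word_image w K"
        then obtain a where a: "x = wval w a" "\<And>i. a i \<in> K" by (rule word_imageE) blast
        show "\<forall>r\<in>S. trunc (nr r) x \<in> word_image w (Br r)"
        proof
          fix r assume "r \<in> S"
          have "trunc (nr r) x = wval w (\<lambda>i. trunc (nr r) (a i))"
            unfolding a(1) by (rule wval_hom[OF trunc_hom, symmetric])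
          also have "\<dots> \<in> word_image w (Br r)"
            by (rule word_imageI) (use \<open>r \<in> S\<close> a(2) in \<open>auto simp: S_def\<close>)
          finally show "trunc (nr r) x \<in> word_image w (Br r)" .
        qed
      qed
      finally show "x \<in> \<phi> -` word_image w K0 \<longleftrightarrow> x \<in> word_image w K" .
    qed
    ultimately show ?thesis by blast
  qed
  ultimately show ?thesis by blast
qed


theorem mainTheorem19:
  fixes G_witness :: "'a::{topological_group_add, polish_space}"
  assumes "locally_compact_space (euclidean :: 'a topology)"
  shows "\<exists>K0 :: (nat \<Rightarrow> 'a) set. compact K0 \<and> 0 \<in> K0 \<and>
    (\<forall>K :: (nat \<Rightarrow> 'a) set. compact K \<and> 0 \<in> K \<longrightarrow>
       (\<exists>\<phi> :: (nat \<Rightarrow> 'a) \<Rightarrow> (nat \<Rightarrow> 'a). continuous_on UNIV \<phi> \<and> group_hom \<phi> \<and>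
          (\<forall>w. \<phi> -` word_image w K0 = word_image w K))) \<and>
    (\<forall>K :: (nat \<Rightarrow> 'a) set. compact K \<longrightarrow>
       (\<exists>\<psi> :: (nat \<Rightarrow> 'a) \<Rightarrow> (nat \<Rightarrow> 'a). continuous_on UNIV \<psi> \<and> group_hom \<psi> \<and>
          \<psi> -` gen_subgroup K0 = gen_subgroup K))"
proof -
  obtain K0 :: "(nat \<Rightarrow> 'a) set" where K0: "compact K0" "0 \<in> K0"
    and P: "\<And>K :: (nat \<Rightarrow> 'a) set. compact K \<and> 0 \<in> K \<Longrightarrow>
       (\<exists>\<phi> :: (nat \<Rightarrow> 'a) \<Rightarrow> (nat \<Rightarrow> 'a). continuous_on UNIV \<phi> \<and> group_hom \<phi> \<and>
          (\<forall>w. \<phi> -` word_image w K0 = word_image w K))"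
    using part1[OF assms] by blast
  have Q: "\<exists>\<psi> :: (nat \<Rightarrow> 'a) \<Rightarrow> (nat \<Rightarrow> 'a). continuous_on UNIV \<psi> \<and> group_hom \<psi> \<and>
          \<psi> -` gen_subgroup K0 = gen_subgroup K" if K: "compact K" for K :: "(nat \<Rightarrow> 'a) set"
  proof -
    have "compact (insert 0 K) \<and> 0 \<in> insert 0 K" using K by simp
    then obtain \<phi> :: "(nat \<Rightarrow> 'a) \<Rightarrow> (nat \<Rightarrow> 'a)" where phi: "continuous_on UNIV \<phi>" "group_hom \<phi>"
      "\<And>w. \<phi> -` word_image w K0 = word_image w (insert 0 K)"
      using P by blast
    have "\<phi> -` gen_subgroup K0 = \<phi> -` {z. \<exists>w. z \<in> word_image w K0}"
      by (simp add: gen_word[OF K0(2)])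
    also have "\<dots> = {z. \<exists>w. z \<in> word_image w (insert 0 K)}"
      using phi(3) by blast
    also have "\<dots> = gen_subgroup (insert 0 K)" by (simp add: gen_word)
    also have "\<dots> = gen_subgroup K" by (rule gen_insert0)
    finally show ?thesis using phi(1,2) by blast
  qed
  show ?thesis using K0 P Q by blast
qed

end
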